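(* Let $f\in C^1(\mathbb{R})$ and consider the primary matrix function $f:\mathrm{Sym}(n)\to\mathrm{Sym}(n)$. Consider the conditions: (H-mon) $\langle f(B)-f(A),B-A\rangle>0$ for all $A\neq B\in\mathrm{Sym}(n)$; (O-mon) for all $A,B\in\mathrm{Sym}(n)$: if $B-A$ is positive definite then $f(B)-f(A)$ is positive definite; (S-mon) for all $a,b\in\mathbb{R}$: $b>a$ implies $f(b)>f(a)$; (P-mon) $\langle f(A+H)-f(A),H\rangle>0$ for all $H\in\mathrm{PSym}(n)$ and $A\in\mathrm{Sym}(n)$. Then (O-mon) $\Rightarrow$ (S-mon) $\Leftrightarrow$ (H-mon) $\Leftrightarrow$ (P-mon), and these are the only implications that hold in general; in particular (S-mon) does not in general imply (O-mon).
   Context: $\mathrm{Sym}(n)$ is the space of real symmetric $n\times n$ matrices with inner product $\langle X,Y\rangle=\mathrm{tr}(X^TY)$, and $\mathrm{PSym}(n)$ is the set of symmetric positive definite matrices. The primary matrix function is $f(A)=Q^T\mathrm{diag}(f(\lambda_1),\dots,f(\lambda_n))Q$ whenever $A=Q^T\mathrm{diag}(\lambda_1,\dots,\lambda_n)Q$ with $Q\in\mathrm{O}(n)$. *)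

theory Defs
  imports "HOL-Analysis.Analysis"
begin

definition C1_real :: "(real \<Rightarrow> real) \<Rightarrow> bool" where
  "C1_real f \<longleftrightarrow> (\<exists>f'. (\<forall>x. (f has_real_derivative f' x) (at x)) \<and> continuous_on UNIV f')"

definition sym_mat :: "real^'n^'n \<Rightarrow> bool" where
  "sym_mat A \<longleftrightarrow> transpose A = A"

definition pos_def_mat :: "real^'n^'n \<Rightarrow> bool" where
  "pos_def_mat A \<longleftrightarrow> sym_mat A \<and> (\<forall>x. x \<noteq> 0 \<longrightarrow> 0 < x \<bullet> (A *v x))"

definition frob_inner :: "real^'n^'n \<Rightarrow> real^'n^'n \<Rightarrow> real" where
  "frob_inner X Y = trace (transpose X ** Y)"

definition diag_mat :: "('n \<Rightarrow> real) \<Rightarrow> real^'n^'n" where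
  "diag_mat l = (\<chi> i j. if i = j then l i else 0)"

definition mat_fun :: "(real \<Rightarrow> real) \<Rightarrow> real^'n^'n \<Rightarrow> real^'n^'n" where
  "mat_fun f A = (let (Q, l) = (SOME (Q, l). orthogonal_matrix Q \<and> A = transpose Q ** diag_mat l ** Q)
                  in transpose Q ** diag_mat (\<lambda>i. f (l i)) ** Q)"

definition H_mon :: "('n::finite) itself \<Rightarrow> (real \<Rightarrow> real) \<Rightarrow> bool" where
  "H_mon _ f \<longleftrightarrow> (\<forall>A B :: real^'n^'n. sym_mat A \<and> sym_mat B \<and> A \<noteq> B \<longrightarrow>
      frob_inner (mat_fun f B - mat_fun f A) (B - A) > 0)"

definition O_mon :: "('n::finite) itself \<Rightarrow> (real \<Rightarrow> real) \<Rightarrow> bool" where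
  "O_mon _ f \<longleftrightarrow> (\<forall>A B :: real^'n^'n. sym_mat A \<and> sym_mat B \<and> pos_def_mat (B - A) \<longrightarrow>
      pos_def_mat (mat_fun f B - mat_fun f A))"

definition S_mon :: "(real \<Rightarrow> real) \<Rightarrow> bool" where
  "S_mon f \<longleftrightarrow> (\<forall>a b. b > a \<longrightarrow> f b > f a)"

definition P_mon :: "('n::finite) itself \<Rightarrow> (real \<Rightarrow> real) \<Rightarrow> bool" where
  "P_mon _ f \<longleftrightarrow> (\<forall>A H :: real^'n^'n. sym_mat A \<and> pos_def_mat H \<longrightarrow>
      frob_inner (mat_fun f (A + H) - mat_fun f A) H > 0)"

end

theory Submission
  imports Defs
begin



lemma mult_transpose_entry: "(X ** transpose Y)$i$j = (\<Sum>k\<in>UNIV. X$i$k * Y$j$k)"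
  by (simp add: matrix_matrix_mult_def transpose_def)

lemma diag_mult_left: "(diag_mat l ** M) = (\<chi> i j. l i * M$i$j)"
  unfolding matrix_matrix_mult_def diag_mat_def vec_eq_iff
  by (simp add: if_distrib[of "\<lambda>x. x * _"] cong: if_cong)

lemma diag_mult_right: "(M ** diag_mat l) = (\<chi> i j. M$i$j * l j)"
  unfolding matrix_matrix_mult_def diag_mat_def vec_eq_iff
  by (simp add: if_distrib[of "\<lambda>x. _ * x"] cong: if_cong)

lemma orth_rows: "orthogonal_matrix (U::real^'n^'n) \<Longrightarrow> (\<Sum>k\<in>UNIV. U$i$k * U$j$k) = (if i = j then 1 else 0)"
proof -
  assume "orthogonal_matrix U"
  then have "U ** transpose U = mat 1" by (simp add: orthogonal_matrix_def)
  then have "(U ** transpose U)$i$j = (mat 1 :: real^'n^'n)$i$j" by simp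
  then show ?thesis by (simp add: mult_transpose_entry mat_def)
qed

lemma conj_eq:
  fixes P Q :: "real^'n^'n"
  assumes P: "orthogonal_matrix P" and Q: "orthogonal_matrix Q"
    and h: "\<And>i j. (P ** transpose Q)$i$j \<noteq> 0 \<Longrightarrow> a i = b j"
  shows "transpose P ** diag_mat a ** P = transpose Q ** diag_mat b ** Q"
proof -
  define R where "R = P ** transpose Q"
  have RQ: "R ** Q = P" using Q unfolding R_def orthogonal_matrix_def
    by (metis matrix_mul_assoc matrix_mul_rid)
  have PR: "transpose P ** R = transpose Q" using P unfolding R_def orthogonal_matrix_def
    by (metis matrix_mul_assoc matrix_mul_lid)
  have comm: "diag_mat a ** R = R ** diag_mat b"
    unfolding diag_mult_left diag_mult_right vec_eq_iff
    using h unfolding R_def by (metis (no_types, lifting) mult.commute mult_zero_left vec_lambda_beta)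
  have "transpose P ** diag_mat a ** P = transpose P ** (diag_mat a ** R) ** Q"
    by (metis RQ matrix_mul_assoc)
  also have "\<dots> = transpose P ** R ** diag_mat b ** Q" by (simp add: comm matrix_mul_assoc)
  also have "\<dots> = transpose Q ** diag_mat b ** Q" by (simp add: PR)
  finally show ?thesis .
qed

lemma conj_rel:
  fixes P Q :: "real^'n^'n"
  assumes P: "orthogonal_matrix P" and Q: "orthogonal_matrix Q"
    and eq: "transpose P ** diag_mat a ** P = transpose Q ** diag_mat b ** Q"
  shows "(P ** transpose Q)$i$j \<noteq> 0 \<Longrightarrow> a i = b j"
proof -
  define R where "R = P ** transpose Q"
  have "P ** (transpose P ** diag_mat a ** P) ** transpose Q = P ** (transpose Q ** diag_mat b ** Q) ** transpose Q"
    using eq by simp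
  moreover have "P ** (transpose P ** diag_mat a ** P) ** transpose Q = diag_mat a ** R"
    using P unfolding R_def orthogonal_matrix_def by (simp add: matrix_mul_assoc)
  moreover have "P ** (transpose Q ** diag_mat b ** Q) ** transpose Q = R ** diag_mat b"
    using Q unfolding R_def orthogonal_matrix_def by (metis matrix_mul_assoc matrix_mul_rid)
  ultimately have "diag_mat a ** R = R ** diag_mat b" by simp
  then have "(diag_mat a ** R)$i$j = (R ** diag_mat b)$i$j" by simp
  then have "a i * R$i$j = R$i$j * b j" by (simp add: diag_mult_left diag_mult_right)
  then show "(P ** transpose Q)$i$j \<noteq> 0 \<Longrightarrow> a i = b j" unfolding R_def by simp
qed

lemma mat_fun_eq:
  fixes Q :: "real^'n^'n"
  assumes Q: "orthogonal_matrix Q" and A: "A = transpose Q ** diag_mat l ** Q"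
  shows "mat_fun f A = transpose Q ** diag_mat (\<lambda>i. f (l i)) ** Q"
proof -
  define p where "p = (SOME (Q, l). orthogonal_matrix Q \<and> A = transpose Q ** diag_mat l ** Q)"
  have ex: "\<exists>x. (\<lambda>(Q, l). orthogonal_matrix Q \<and> A = transpose Q ** diag_mat l ** Q) x"
    using Q A by auto
  obtain Q0 l0 where p: "p = (Q0, l0)" by fastforce
  have h: "orthogonal_matrix Q0 \<and> A = transpose Q0 ** diag_mat l0 ** Q0"
    using someI_ex[OF ex] unfolding p_def[symmetric] p by simp
  have "mat_fun f A = transpose Q0 ** diag_mat (\<lambda>i. f (l0 i)) ** Q0"
    unfolding mat_fun_def p_def[symmetric] p by simp
  also have "\<dots> = transpose Q ** diag_mat (\<lambda>i. f (l i)) ** Q"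
    apply (rule conj_eq)
    using h Q A conj_rel[of Q0 Q l0 l] by auto
  finally show ?thesis .
qed




lemma sym_inner: "sym_mat A \<Longrightarrow> (A *v x) \<bullet> y = x \<bullet> (A *v (y::real^'n))"
  by (metis dot_lmul_matrix sym_mat_def transpose_matrix_vector)

lemma eig_exists:
  fixes A :: "real^'n^'n"
  assumes sym: "sym_mat A" and V: "subspace V" and inv: "\<And>x. x \<in> V \<Longrightarrow> A *v x \<in> V"
    and x0: "x0 \<in> V" "x0 \<noteq> 0"
  shows "\<exists>u\<in>V. norm u = 1 \<and> A *v u = (u \<bullet> (A *v u)) *\<^sub>R u"
proof -
  define K where "K = V \<inter> sphere 0 1"
  have "compact K" unfolding K_def
    using closed_subspace[OF V] compact_sphere by (simp add: closed_Int_compact)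
  moreover have "K \<noteq> {}"
  proof -
    have "x0 /\<^sub>R norm x0 \<in> K" unfolding K_def using x0 V by (simp add: subspace_scale)
    then show ?thesis by blast
  qed
  moreover have "continuous_on K (\<lambda>y. y \<bullet> (A *v y))"
    by (intro continuous_intros)
  ultimately obtain u where uK: "u \<in> K" and umax: "\<And>y. y \<in> K \<Longrightarrow> y \<bullet> (A *v y) \<le> u \<bullet> (A *v u)"
    using continuous_attains_sup[of K "\<lambda>y. y \<bullet> (A *v y)"] by blast
  define M where "M = u \<bullet> (A *v u)"
  have uV: "u \<in> V" and un: "norm u = 1" using uK K_def by auto
  have uu: "u \<bullet> u = 1" using un by (simp add: norm_eq_1)
  have bound: "y \<bullet> (A *v y) \<le> M * (y \<bullet> y)" if "y \<in> V" for y
  proof (cases "y = 0")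
    case True then show ?thesis by simp
  next
    case False
    have "y /\<^sub>R norm y \<in> K" unfolding K_def using that V False by (simp add: subspace_scale)
    then have "(y /\<^sub>R norm y) \<bullet> (A *v (y /\<^sub>R norm y)) \<le> M" using umax M_def by blast
    then have "(y \<bullet> (A *v y)) / (norm y)^2 \<le> M"
      by (simp add: matrix_vector_mult_scaleR power2_eq_square divide_inverse mult_ac)
    then show ?thesis using False by (simp add: divide_le_eq power2_norm_eq_inner mult.commute)
  qed
  define w where "w = A *v u - M *\<^sub>R u"
  have wV: "w \<in> V" unfolding w_def using inv[OF uV] uV V by (simp add: subspace_diff subspace_scale)
  have uw: "u \<bullet> w = 0" unfolding w_def M_def using uu by (simp add: inner_diff_right)
  have wAu: "w \<bullet> (A *v u) = w \<bullet> w"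
    unfolding w_def by (simp add: inner_diff_left inner_diff_right inner_commute uw[unfolded w_def] ) (metis M_def inner_commute inner_diff_right inner_scaleR_right uu uw w_def mult.right_neutral inner_diff_left)
  have uAw: "u \<bullet> (A *v w) = w \<bullet> w"
    using sym_inner[OF sym, of u w] wAu by (simp add: inner_commute)
  have ineq: "2 * t * (w \<bullet> w) + t^2 * (w \<bullet> (A *v w)) \<le> M * t^2 * (w \<bullet> w)" for t :: real
  proof -
    have "(u + t *\<^sub>R w) \<in> V" using uV wV V by (simp add: subspace_add subspace_scale)
    then have b: "(u + t *\<^sub>R w) \<bullet> (A *v (u + t *\<^sub>R w)) \<le> M * ((u + t *\<^sub>R w) \<bullet> (u + t *\<^sub>R w))"
      by (rule bound)
    have l: "(u + t *\<^sub>R w) \<bullet> (A *v (u + t *\<^sub>R w)) = M + 2 * t * (w \<bullet> w) + t^2 * (w \<bullet> (A *v w))"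
      using uAw wAu M_def
      by (simp add: matrix_vector_right_distrib matrix_vector_mult_scaleR inner_add_left inner_add_right power2_eq_square algebra_simps)
    have r: "(u + t *\<^sub>R w) \<bullet> (u + t *\<^sub>R w) = 1 + t^2 * (w \<bullet> w)"
      using uu uw by (simp add: inner_add_left inner_add_right inner_commute power2_eq_square)
    have "M + 2 * t * (w \<bullet> w) + t^2 * (w \<bullet> (A *v w)) \<le> M * (1 + t^2 * (w \<bullet> w))"
      using b unfolding l r .
    then show ?thesis by (simp add: algebra_simps)
  qed
  have "w \<bullet> w = 0"
  proof (rule ccontr)
    assume ne: "w \<bullet> w \<noteq> 0"
    then have pos: "w \<bullet> w > 0" by (simp add: order_less_le)
    define C where "C = M * (w \<bullet> w) - w \<bullet> (A *v w)"
    define t where "t = (w \<bullet> w) / (\<bar>C\<bar> + 1)"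
    have tpos: "t > 0" unfolding t_def using pos by simp
    have "2 * t * (w \<bullet> w) \<le> t^2 * C" using ineq[of t] unfolding C_def by (simp add: algebra_simps)
    then have "2 * (w \<bullet> w) \<le> t * C" using tpos by (simp add: power2_eq_square)
    also have "t * C \<le> t * \<bar>C\<bar>" using tpos by (simp add: mult_left_mono)
    also have "\<dots> < w \<bullet> w" unfolding t_def using pos
      by (simp add: divide_less_eq)
    finally show False using pos by simp
  qed
  then have "w = 0" by simp
  then show ?thesis using uV un unfolding w_def M_def by auto
qed




lemma eig_family:
  fixes A :: "real^'n^'n"
  assumes sym: "sym_mat A"
  shows "k \<le> CARD('n) \<Longrightarrow> \<exists>S. finite S \<and> card S = k \<and> pairwise orthogonal S \<and>
     (\<forall>u\<in>S. norm u = 1 \<and> A *v u = (u \<bullet> (A *v u)) *\<^sub>R u)"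
proof (induction k)
  case 0
  show ?case by (rule exI[of _ "{}"]) auto
next
  case (Suc k)
  then obtain S where S: "finite S" "card S = k" "pairwise orthogonal S"
     "\<forall>u\<in>S. norm u = 1 \<and> A *v u = (u \<bullet> (A *v u)) *\<^sub>R u" by auto
  define V where "V = {y. \<forall>x\<in>S. orthogonal x y}"
  have "dim S \<le> card S" using dim_le_card[OF span_superset S(1)] .
  then have "dim S < DIM(real^'n)" using Suc.prems S(2) by simp
  then obtain x0 where x0: "x0 \<noteq> 0" "\<And>y. y \<in> span S \<Longrightarrow> orthogonal x0 y"
    using orthogonal_to_subspace_exists by blast
  have x0V: "x0 \<in> V" unfolding V_def using x0(2)[OF span_base] orthogonal_commute by blast
  have inv: "A *v y \<in> V" if yV: "y \<in> V" for y
  proof -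
    have "orthogonal x (A *v y)" if xS: "x \<in> S" for x
    proof -
      have "x \<bullet> (A *v y) = (A *v x) \<bullet> y" using sym_inner[OF sym] by simp
      also have "\<dots> = (x \<bullet> (A *v x)) * (x \<bullet> y)" using S(4) xS by (metis inner_scaleR_left)
      also have "\<dots> = 0" using yV xS unfolding V_def orthogonal_def by simp
      finally show ?thesis unfolding orthogonal_def .
    qed
    then show ?thesis unfolding V_def by blast
  qed
  obtain u where u: "u \<in> V" "norm u = 1" "A *v u = (u \<bullet> (A *v u)) *\<^sub>R u"
    using eig_exists[OF sym _ inv x0V x0(1)] subspace_orthogonal_to_vectors unfolding V_def by blast
  have uS: "u \<notin> S"
  proof
    assume "u \<in> S"
    then have "orthogonal u u" using u(1) unfolding V_def by blast
    then show False using u(2) by (simp add: orthogonal_def)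
  qed
  show ?case
  proof (intro exI[of _ "insert u S"] conjI)
    show "finite (insert u S)" using S by simp
    show "card (insert u S) = Suc k" using S uS by simp
    show "pairwise orthogonal (insert u S)"
      using S(3) u(1) unfolding V_def pairwise_insert by (auto simp: orthogonal_commute)
    show "\<forall>v\<in>insert u S. norm v = 1 \<and> A *v v = (v \<bullet> (A *v v)) *\<^sub>R v" using S(4) u by auto
  qed
qed

lemma spectral:
  fixes A :: "real^'n^'n"
  assumes sym: "sym_mat A"
  shows "\<exists>Q l. orthogonal_matrix Q \<and> A = transpose Q ** diag_mat l ** Q"
proof -
  obtain S where S: "finite S" "card S = CARD('n)" "pairwise orthogonal S"
     "\<forall>u\<in>S. norm u = 1 \<and> A *v u = (u \<bullet> (A *v u)) *\<^sub>R u"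
    using eig_family[OF sym, of "CARD('n)"] by auto
  obtain h where h: "bij_betw h (UNIV::'n set) S"
    using finite_same_card_bij[of "UNIV::'n set" S] S by auto
  define Q :: "real^'n^'n" where "Q = (\<chi> i. h i)"
  define l where "l i = h i \<bullet> (A *v h i)" for i
  have hS: "h i \<in> S" for i using h by (auto simp: bij_betw_def)
  have hinner: "h i \<bullet> h j = (if i = j then 1 else 0)" for i j
  proof (cases "i = j")
    case True then show ?thesis using S(4) hS by (simp add: norm_eq_1)
  next
    case False
    then have "h i \<noteq> h j" using h by (auto simp: bij_betw_def inj_on_def)
    then show ?thesis using S(3) hS False unfolding pairwise_def orthogonal_def by auto
  qed
  have hsum: "(\<Sum>k\<in>UNIV. h i $ k * h j $ k) = (if i = j then 1 else 0)" for i j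
    using hinner[of i j] by (simp add: inner_vec_def)
  have QQt: "Q ** transpose Q = mat 1"
    unfolding vec_eq_iff mult_transpose_entry
    unfolding Q_def mat_def by (simp add: hsum)
  then have orth: "orthogonal_matrix Q" unfolding orthogonal_matrix_def
    using matrix_left_right_inverse by blast
  have eig: "A *v h j = l j *\<^sub>R h j" for j using S(4) hS l_def by auto
  have D: "Q ** A ** transpose Q = diag_mat l"
  proof -
    have "(Q ** A ** transpose Q)$i$j = h i \<bullet> (A *v h j)" for i j
      unfolding mult_transpose_entry
      by (simp add: Q_def inner_vec_def matrix_matrix_mult_def matrix_vector_mult_def
          sum_distrib_left sum_distrib_right mult_ac, subst sum.swap, simp add: mult_ac)
    then show ?thesis unfolding vec_eq_iff diag_mat_def by (auto simp: eig hinner)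
  qed
  have "A = transpose Q ** (Q ** A ** transpose Q) ** Q"
    using orth unfolding orthogonal_matrix_def by (metis matrix_mul_assoc matrix_mul_lid matrix_mul_rid)
  then show ?thesis using orth D by auto
qed




lemma frob_sum: "frob_inner X Y = (\<Sum>k\<in>UNIV. \<Sum>m\<in>UNIV. X$m$k * Y$m$k)"
  by (simp add: frob_inner_def trace_def matrix_matrix_mult_def transpose_def)

lemma frob_diff_left: "frob_inner (X - Y) Z = frob_inner X Z - frob_inner Y Z"
  by (simp add: frob_sum left_diff_distrib sum_subtractf)

lemma frob_diff_right: "frob_inner Z (X - Y) = frob_inner Z X - frob_inner Z Y"
  by (simp add: frob_sum right_diff_distrib sum_subtractf)

lemma conj_entry: "(transpose U ** diag_mat a ** U)$m$k = (\<Sum>i\<in>UNIV. a i * (U$i$m * U$i$k))"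
  unfolding diag_mult_right by (simp add: matrix_matrix_mult_def transpose_def mult_ac)

lemma sum4_swap: "(\<Sum>k\<in>A. \<Sum>m\<in>B. \<Sum>i\<in>C. \<Sum>j\<in>D. f k m i j) = (\<Sum>i\<in>C. \<Sum>j\<in>D. \<Sum>k\<in>A. \<Sum>m\<in>B. f k m i j)"
proof -
  have "(\<Sum>k\<in>A. \<Sum>m\<in>B. \<Sum>i\<in>C. \<Sum>j\<in>D. f k m i j) = (\<Sum>k\<in>A. \<Sum>i\<in>C. \<Sum>m\<in>B. \<Sum>j\<in>D. f k m i j)"
    by (rule sum.cong[OF refl], rule sum.swap)
  also have "\<dots> = (\<Sum>k\<in>A. \<Sum>i\<in>C. \<Sum>j\<in>D. \<Sum>m\<in>B. f k m i j)"
    by (rule sum.cong[OF refl], rule sum.cong[OF refl], rule sum.swap)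
  also have "\<dots> = (\<Sum>i\<in>C. \<Sum>k\<in>A. \<Sum>j\<in>D. \<Sum>m\<in>B. f k m i j)"
    by (rule sum.swap)
  also have "\<dots> = (\<Sum>i\<in>C. \<Sum>j\<in>D. \<Sum>k\<in>A. \<Sum>m\<in>B. f k m i j)"
    by (rule sum.cong[OF refl], rule sum.swap)
  finally show ?thesis .
qed

lemma frob_conj:
  "frob_inner (transpose U ** diag_mat a ** U) (transpose V ** diag_mat b ** V) =
   (\<Sum>i\<in>UNIV. \<Sum>j\<in>UNIV. a i * b j * (\<Sum>k\<in>UNIV. U$i$k * V$j$k)^2)"
proof -
  have "frob_inner (transpose U ** diag_mat a ** U) (transpose V ** diag_mat b ** V) =
    (\<Sum>k\<in>UNIV. \<Sum>m\<in>UNIV. \<Sum>i\<in>UNIV. \<Sum>j\<in>UNIV. a i * b j * (U$i$m * V$j$m) * (U$i$k * V$j$k))"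
    unfolding frob_sum conj_entry
    by (simp add: sum_product mult_ac)
  also have "\<dots> = (\<Sum>i\<in>UNIV. \<Sum>j\<in>UNIV. \<Sum>k\<in>UNIV. \<Sum>m\<in>UNIV. a i * b j * (U$i$m * V$j$m) * (U$i$k * V$j$k))"
    by (rule sum4_swap)
  also have "\<dots> = (\<Sum>i\<in>UNIV. \<Sum>j\<in>UNIV. a i * b j * (\<Sum>k\<in>UNIV. U$i$k * V$j$k)^2)"
    by (simp add: power2_eq_square sum_product sum_distrib_left mult_ac)
  finally show ?thesis .
qed




lemma orth_sq_row: "orthogonal_matrix (R::real^'n^'n) \<Longrightarrow> (\<Sum>j\<in>UNIV. (R$i$j)^2) = 1"
  using orth_rows[of R i i] by (simp add: power2_eq_square)

lemma orth_sq_col: "orthogonal_matrix (R::real^'n^'n) \<Longrightarrow> (\<Sum>i\<in>UNIV. (R$i$j)^2) = 1"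
proof -
  assume "orthogonal_matrix R"
  then have "orthogonal_matrix (transpose R)" by simp
  then have "(\<Sum>i\<in>UNIV. ((transpose R)$j$i)^2) = 1" by (rule orth_sq_row)
  then show ?thesis by (simp add: transpose_def)
qed

lemma frob_self_conj:
  assumes "orthogonal_matrix (Q::real^'n^'n)"
  shows "frob_inner (transpose Q ** diag_mat a ** Q) (transpose Q ** diag_mat b ** Q) = (\<Sum>j\<in>UNIV. a j * b j)"
proof -
  have "frob_inner (transpose Q ** diag_mat a ** Q) (transpose Q ** diag_mat b ** Q) =
     (\<Sum>i\<in>UNIV. \<Sum>j\<in>UNIV. a i * b j * (if i = j then 1 else 0))"
  proof -
    have "(\<Sum>k\<in>UNIV. Q$i$k * Q$j$k)^2 = (if i = j then 1 else 0)" for i j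
      using orth_rows[OF assms, of i j] by simp
    then show ?thesis unfolding frob_conj by simp
  qed
  then show ?thesis by (simp add: if_distrib[of "\<lambda>x. _ * x"] cong: if_cong)
qed

lemma S_imp_H_pair:
  fixes A B :: "real^'n^'n"
  assumes mono: "\<And>a b. b > a \<Longrightarrow> f b > f a" and sA: "sym_mat A" and sB: "sym_mat B" and ne: "A \<noteq> B"
  shows "frob_inner (mat_fun f B - mat_fun f A) (B - A) > 0"
proof -
  obtain P lam where P: "orthogonal_matrix P" and A: "A = transpose P ** diag_mat lam ** P"
    using spectral[OF sA] by auto
  obtain Q mu where Q: "orthogonal_matrix Q" and B: "B = transpose Q ** diag_mat mu ** Q"
    using spectral[OF sB] by auto
  have FA: "mat_fun f A = transpose P ** diag_mat (\<lambda>i. f (lam i)) ** P" by (rule mat_fun_eq[OF P A])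
  have FB: "mat_fun f B = transpose Q ** diag_mat (\<lambda>i. f (mu i)) ** Q" by (rule mat_fun_eq[OF Q B])
  define R where "R = P ** transpose Q"
  have R: "orthogonal_matrix R" unfolding R_def using P Q by (simp add: orthogonal_matrix_mul)
  define c where "c i j = (R$i$j)^2" for i j
  have cdef: "(\<Sum>k\<in>UNIV. P$i$k * Q$j$k)^2 = c i j" for i j unfolding c_def R_def mult_transpose_entry ..
  have cdef': "(\<Sum>k\<in>UNIV. Q$j$k * P$i$k)^2 = c i j" for i j using cdef by (simp add: mult.commute)
  have rows: "(\<Sum>j\<in>UNIV. c i j) = 1" for i unfolding c_def using orth_sq_row[OF R] .
  have cols: "(\<Sum>i\<in>UNIV. c i j) = 1" for j unfolding c_def using orth_sq_col[OF R] .
  define T where "T = (\<Sum>i\<in>UNIV. \<Sum>j\<in>UNIV. c i j * ((f (mu j) - f (lam i)) * (mu j - lam i)))"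
  have S1: "frob_inner (mat_fun f B) B = (\<Sum>i\<in>UNIV. \<Sum>j\<in>UNIV. c i j * (f (mu j) * mu j))"
  proof -
    have "frob_inner (mat_fun f B) B = (\<Sum>j\<in>UNIV. f (mu j) * mu j)"
      unfolding FB unfolding B by (rule frob_self_conj[OF Q])
    also have "\<dots> = (\<Sum>j\<in>UNIV. \<Sum>i\<in>UNIV. c i j * (f (mu j) * mu j))"
      by (simp add: sum_distrib_right[symmetric] cols)
    also have "\<dots> = (\<Sum>i\<in>UNIV. \<Sum>j\<in>UNIV. c i j * (f (mu j) * mu j))" by (rule sum.swap)
    finally show ?thesis .
  qed
  have S4: "frob_inner (mat_fun f A) A = (\<Sum>i\<in>UNIV. \<Sum>j\<in>UNIV. c i j * (f (lam i) * lam i))"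
  proof -
    have "frob_inner (mat_fun f A) A = (\<Sum>i\<in>UNIV. f (lam i) * lam i)"
      unfolding FA unfolding A by (rule frob_self_conj[OF P])
    also have "\<dots> = (\<Sum>i\<in>UNIV. \<Sum>j\<in>UNIV. c i j * (f (lam i) * lam i))"
      by (simp add: sum_distrib_right[symmetric] rows)
    finally show ?thesis .
  qed
  have S2: "frob_inner (mat_fun f B) A = (\<Sum>i\<in>UNIV. \<Sum>j\<in>UNIV. c i j * (f (mu j) * lam i))"
  proof -
    have "frob_inner (mat_fun f B) A = (\<Sum>j\<in>UNIV. \<Sum>i\<in>UNIV. c i j * (f (mu j) * lam i))"
      unfolding FB unfolding A frob_conj cdef' by (simp add: mult_ac)
    also have "\<dots> = (\<Sum>i\<in>UNIV. \<Sum>j\<in>UNIV. c i j * (f (mu j) * lam i))" by (rule sum.swap)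
    finally show ?thesis .
  qed
  have S3: "frob_inner (mat_fun f A) B = (\<Sum>i\<in>UNIV. \<Sum>j\<in>UNIV. c i j * (f (lam i) * mu j))"
    unfolding FA unfolding B frob_conj cdef by (simp add: mult_ac)
  have "frob_inner (mat_fun f B - mat_fun f A) (B - A) =
     frob_inner (mat_fun f B) B - frob_inner (mat_fun f B) A - frob_inner (mat_fun f A) B + frob_inner (mat_fun f A) A"
    by (simp add: frob_diff_left frob_diff_right)
  also have "\<dots> = T"
    unfolding S1 S2 S3 S4 T_def
    by (simp add: sum_subtractf[symmetric] sum.distrib[symmetric] algebra_simps)
  finally have eqT: "frob_inner (mat_fun f B - mat_fun f A) (B - A) = T" .
  have termpos: "0 \<le> (f (mu j) - f (lam i)) * (mu j - lam i)" for i j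
  proof (cases "mu j > lam i")
    case True then show ?thesis using mono[OF True] by simp
  next
    case False
    then show ?thesis
    proof (cases "mu j = lam i")
      case False
      then have "lam i > mu j" using \<open>\<not> mu j > lam i\<close> by simp
      then show ?thesis using mono[of "mu j" "lam i"] by (simp add: mult_nonpos_nonpos)
    qed simp
  qed
  have nonneg: "0 \<le> c i j * ((f (mu j) - f (lam i)) * (mu j - lam i))" for i j
    unfolding c_def using termpos by simp
  have "T > 0"
  proof (rule ccontr)
    assume "\<not> T > 0"
    then have "T = 0" unfolding T_def using nonneg by (meson not_less sum_nonneg order_antisym)
    then have z: "c i j * ((f (mu j) - f (lam i)) * (mu j - lam i)) = 0" for i j
      unfolding T_def using nonneg
      by (simp add: sum_nonneg_eq_0_iff sum_nonneg)
    have "lam i = mu j" if "(P ** transpose Q)$i$j \<noteq> 0" for i j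
    proof (rule ccontr)
      assume neq: "lam i \<noteq> mu j"
      have "c i j > 0" using that unfolding c_def R_def by simp
      moreover have "(f (mu j) - f (lam i)) * (mu j - lam i) > 0"
      proof (cases "mu j > lam i")
        case True then show ?thesis using mono[OF True] by simp
      next
        case False
        then have "lam i > mu j" using neq by simp
        then show ?thesis using mono[of "mu j" "lam i"] by (simp add: mult_neg_neg)
      qed
      ultimately have "c i j * ((f (mu j) - f (lam i)) * (mu j - lam i)) > 0" by (rule mult_pos_pos)
      then show False using z[of i j] by linarith
    qed
    then have "A = B" unfolding A B by (rule conj_eq[OF P Q])
    then show False using ne by simp
  qed
  then show ?thesis using eqT by simp
qed




lemma cube_mono: "(a::real) < b \<Longrightarrow> a^3 < b^3"
proof -
  assume "a < b"
  have "b^3 - a^3 = (b - a) * ((a + b/2)^2 + 3/4 * b^2)" by (simp add: power2_eq_square power3_eq_cube algebra_simps)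
  moreover have "(a + b/2)^2 + 3/4 * b^2 > 0"
  proof (cases "b = 0")
    case True then show ?thesis using \<open>a < b\<close> by simp
  next
    case False then have "b^2 > 0" by simp
    then show ?thesis using zero_le_power2[of "a + b/2"] by linarith
  qed
  moreover have "b - a > 0" using \<open>a < b\<close> by simp
  ultimately have "b^3 - a^3 > 0" by simp
  then show ?thesis by simp
qed

lemma C1_cube: "C1_real (\<lambda>x. x^3)"
  unfolding C1_real_def
proof (intro exI[of _ "\<lambda>x. 3 * x^2"] conjI allI)
  fix x :: real
  show "((\<lambda>x. x^3) has_real_derivative 3 * x^2) (at x)"
    using DERIV_pow[of 3 x] by simp
  show "continuous_on UNIV (\<lambda>x::real. 3 * x^2)" by (intro continuous_intros)
qed

lemma diag_const: "diag_mat (\<lambda>_. a) = mat a"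
  by (simp add: diag_mat_def mat_def)

lemma mat_fun_diag: "mat_fun f (diag_mat l) = diag_mat (\<lambda>i. f (l i))"
  using mat_fun_eq[OF orthogonal_matrix_id, of "diag_mat l" l f] by simp

lemma mat_fun_scalar: "mat_fun f (mat a :: real^'n^'n) = mat (f a)"
  using mat_fun_diag[of f "\<lambda>_. a"] by (simp add: diag_const)

lemma mat_diff: "mat b - mat a = (mat (b - a) :: real^'n^'n)"
  by (simp add: vec_eq_iff mat_def)

lemma sym_mat_mat: "sym_mat (mat a :: real^'n^'n)"
  by (simp add: sym_mat_def)

lemma mat_mult_vec: "(mat c :: real^'n^'n) *v x = c *\<^sub>R x"
  by (simp add: vec_eq_iff matrix_vector_mult_def mat_def if_distrib[of "\<lambda>x. x * _"] cong: if_cong)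

lemma pos_def_mat_iff: "pos_def_mat (mat c :: real^'n^'n) \<longleftrightarrow> c > 0"
proof
  assume "pos_def_mat (mat c :: real^'n^'n)"
  then have "0 < (axis undefined 1 :: real^'n) \<bullet> (mat c *v axis undefined 1)"
    unfolding pos_def_mat_def by (simp add: axis_eq_0_iff)
  then show "c > 0" by (simp add: mat_mult_vec)
next
  assume "c > 0"
  then show "pos_def_mat (mat c :: real^'n^'n)"
    unfolding pos_def_mat_def by (simp add: sym_mat_mat mat_mult_vec)
qed

lemma frob_mat: "frob_inner (mat x :: real^'n^'n) (mat y) = real CARD('n) * x * y"
  by (simp add: frob_sum mat_def if_distrib[of "\<lambda>z. z * _"] if_distrib[of "\<lambda>z. _ * z"] cong: if_cong)




lemma quad_conj:
  fixes U :: "real^'n^'n"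
  shows "x \<bullet> ((transpose U ** diag_mat d ** U) *v x) = (\<Sum>i\<in>UNIV. d i * ((U *v x)$i)^2)"
proof -
  have "x \<bullet> ((transpose U ** diag_mat d ** U) *v x) = x \<bullet> (transpose U *v (diag_mat d *v (U *v x)))"
    by (simp add: matrix_vector_mul_assoc matrix_mul_assoc)
  also have "\<dots> = (U *v x) \<bullet> (diag_mat d *v (U *v x))"
    by (metis dot_lmul_matrix inner_commute transpose_matrix_vector)
  also have "\<dots> = (\<Sum>i\<in>UNIV. d i * ((U *v x)$i)^2)"
    unfolding inner_vec_def
    by (simp add: matrix_vector_mult_def diag_mat_def if_distrib[of "\<lambda>z. z * _"] power2_eq_square mult_ac cong: if_cong)
  finally show ?thesis .
qed

lemma sum_split2:
  fixes g :: "'n::finite \<Rightarrow> real"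
  assumes that: "i0 \<noteq> i1"
  shows "(\<Sum>k\<in>UNIV. g k) = g i0 + g i1 + (\<Sum>k\<in>UNIV - {i0,i1}. g k)"
  using sum.subset_diff[of "{i0,i1}" UNIV g] that by simp

lemma sum_rest_delta:
  assumes that: "finite S"
  shows "(\<Sum>k\<in>S. (if i = k then 1 else 0) * (if j = k then (1::real) else 0)) = (if i = j \<and> i \<in> S then 1 else 0)"
proof -
  have "(\<Sum>k\<in>S. (if i = k then 1 else 0) * (if j = k then (1::real) else 0)) = (\<Sum>k\<in>S. if k = i then (if j = i then 1 else 0) else 0)"
    by (rule sum.cong) auto
  also have "\<dots> = (if i = j \<and> i \<in> S then 1 else 0)" using that by (simp add: sum.delta')
  finally show ?thesis .
qed

lemma counterexample:
  assumes card: "CARD('n) \<ge> 2"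
  shows "\<exists>f. C1_real f \<and> S_mon f \<and> \<not> O_mon TYPE('n::finite) f"
proof -
  have "\<not> (\<forall>a1\<in>(UNIV::'n set). \<forall>a2\<in>UNIV. a1 = a2)"
    using card card_le_Suc0_iff_eq[of "UNIV::'n set"] by auto
  then obtain i0 i1 :: 'n where ne: "i0 \<noteq> i1" by blast
  define Q :: "real^'n^'n" where "Q = (\<chi> i j. if i = i0 then (if j = i0 then 3/5 else if j = i1 then 4/5 else 0)
     else if i = i1 then (if j = i0 then -4/5 else if j = i1 then 3/5 else 0) else if i = j then 1 else 0)"
  have Qrest: "Q$i$k = (if i = k then 1 else 0)" if "k \<notin> {i0, i1}" for i k
    using that unfolding Q_def by auto
  have QQt: "Q ** transpose Q = mat 1"
  proof -
    have "(\<Sum>k\<in>UNIV. Q$i$k * Q$j$k) = (if i = j then 1 else 0)" for i j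
    proof -
      have "(\<Sum>k\<in>UNIV - {i0,i1}. Q$i$k * Q$j$k) = (\<Sum>k\<in>UNIV - {i0,i1}. (if i = k then 1 else 0) * (if j = k then (1::real) else 0))"
        by (rule sum.cong) (auto simp: Qrest)
      also have "\<dots> = (if i = j \<and> i \<in> UNIV - {i0,i1} then 1 else 0)" by (rule sum_rest_delta) simp
      finally have r: "(\<Sum>k\<in>UNIV - {i0,i1}. Q$i$k * Q$j$k) = (if i = j \<and> i \<in> UNIV - {i0,i1} then 1 else 0)" .
      show ?thesis unfolding sum_split2[OF ne] r using ne by (auto simp: Q_def)
    qed
    then show ?thesis unfolding vec_eq_iff mult_transpose_entry by (simp add: mat_def)
  qed
  then have orth: "orthogonal_matrix Q" unfolding orthogonal_matrix_def
    using matrix_left_right_inverse by blast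
  have Qv: "(Q *v x)$i1 = -4/5 * x$i0 + 3/5 * x$i1" for x
  proof -
    have "(\<Sum>k\<in>UNIV - {i0,i1}. Q$i1$k * x$k) = 0"
      by (rule sum.neutral) (auto simp: Qrest)
    then show ?thesis unfolding matrix_vector_mult_def using ne
      by (simp add: sum_split2[OF ne]) (simp add: Q_def)
  qed
  define la :: "'n \<Rightarrow> real" where "la i = (if i = i1 then 2 else 0)" for i
  define lb :: "'n \<Rightarrow> real" where "lb i = (if i = i0 then 5 else 1)" for i
  define A where "A = transpose Q ** diag_mat la ** Q"
  define B :: "real^'n^'n" where "B = diag_mat lb"
  define f :: "real \<Rightarrow> real" where "f x = x^3" for x
  have trdiag: "transpose (diag_mat l) = diag_mat l" for l :: "'n \<Rightarrow> real"
    by (simp add: vec_eq_iff transpose_def diag_mat_def)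
  have symA: "sym_mat A" unfolding sym_mat_def A_def
    by (simp add: matrix_transpose_mul trdiag matrix_mul_assoc)
  have symB: "sym_mat B" unfolding sym_mat_def B_def by (simp add: trdiag)
  have B1: "B = transpose (mat 1) ** diag_mat lb ** mat 1" unfolding B_def by simp
  have qA: "x \<bullet> (A *v x) = 2 * ((Q *v x)$i1)^2" for x
    unfolding A_def quad_conj la_def by (simp add: if_distrib[of "\<lambda>z. z * _"] cong: if_cong)
  have qB: "x \<bullet> (B *v x) = 5 * (x$i0)^2 + (x$i1)^2 + (\<Sum>k\<in>UNIV - {i0,i1}. (x$k)^2)" for x
  proof -
    have "x \<bullet> (B *v x) = (\<Sum>i\<in>UNIV. lb i * ((mat 1 *v x)$i)^2)" unfolding B1 by (rule quad_conj)
    also have "\<dots> = (\<Sum>i\<in>UNIV. lb i * (x$i)^2)" by simp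
    also have "\<dots> = 5 * (x$i0)^2 + (x$i1)^2 + (\<Sum>k\<in>UNIV - {i0,i1}. lb k * (x$k)^2)"
      unfolding sum_split2[OF ne] using ne by (simp add: lb_def)
    also have "(\<Sum>k\<in>UNIV - {i0,i1}. lb k * (x$k)^2) = (\<Sum>k\<in>UNIV - {i0,i1}. (x$k)^2)"
      by (rule sum.cong) (auto simp: lb_def)
    finally show ?thesis .
  qed
  have pd: "pos_def_mat (B - A)"
    unfolding pos_def_mat_def
  proof (intro conjI allI impI)
    have "transpose (B - A) = transpose B - transpose A" by (simp add: vec_eq_iff transpose_def)
    then show "sym_mat (B - A)" using symA symB by (simp add: sym_mat_def)
    fix x :: "real^'n" assume x: "x \<noteq> 0"
    define a where "a = x$i0"
    define b where "b = x$i1"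
    define r where "r = (\<Sum>k\<in>UNIV - {i0,i1}. (x$k)^2)"
    have r0: "r \<ge> 0" unfolding r_def by (simp add: sum_nonneg)
    have "x \<bullet> ((B - A) *v x) = x \<bullet> (B *v x) - x \<bullet> (A *v x)"
      by (simp add: matrix_vector_mult_diff_rdistrib inner_diff_right)
    also have "\<dots> = (93 * a^2 + 48 * a * b + 7 * b^2) / 25 + r"
      unfolding qA qB Qv a_def[symmetric] b_def[symmetric] r_def[symmetric]
      by (simp add: power2_eq_square algebra_simps)
    finally have eq: "x \<bullet> ((B - A) *v x) = (93 * a^2 + 48 * a * b + 7 * b^2) / 25 + r" .
    have sos: "93 * (93 * a^2 + 48 * a * b + 7 * b^2) = (93 * a + 24 * b)^2 + 75 * b^2"
      by (simp add: power2_eq_square algebra_simps)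
    show "0 < x \<bullet> ((B - A) *v x)"
    proof (cases "a = 0 \<and> b = 0")
      case True
      obtain k where k: "x$k \<noteq> 0" using x by (metis vec_eq_iff zero_index)
      then have kr: "k \<in> UNIV - {i0,i1}" using True a_def b_def by auto
      have "0 < (x$k)^2" using k by simp
      also have "\<dots> \<le> r" unfolding r_def
        by (rule member_le_sum[OF kr]) auto
      finally show ?thesis using eq True by simp
    next
      case False
      have "0 < (93 * a + 24 * b)^2 + 75 * b^2"
      proof (cases "b = 0")
        case True then show ?thesis using False by simp
      next
        case False then have "0 < 75 * b^2" by simp
        then show ?thesis using zero_le_power2[of "93 * a + 24 * b"] by linarith
      qed
      then have "0 < 93 * (93 * a^2 + 48 * a * b + 7 * b^2)" unfolding sos .
      then have "0 < 93 * a^2 + 48 * a * b + 7 * b^2" by (simp add: zero_less_mult_iff)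
      then have "0 < (93 * a^2 + 48 * a * b + 7 * b^2) / 25" by simp
      then show ?thesis unfolding eq using r0 by linarith
    qed
  qed
  have FA: "mat_fun f A = transpose Q ** diag_mat (\<lambda>i. f (la i)) ** Q"
    by (rule mat_fun_eq[OF orth A_def])
  have FB: "mat_fun f B = transpose (mat 1) ** diag_mat (\<lambda>i. f (lb i)) ** mat 1"
    by (rule mat_fun_eq[OF orthogonal_matrix_id B1])
  have npd: "\<not> pos_def_mat (mat_fun f B - mat_fun f A)"
  proof
    assume "pos_def_mat (mat_fun f B - mat_fun f A)"
    then have "0 < axis i1 1 \<bullet> ((mat_fun f B - mat_fun f A) *v axis i1 (1::real))"
      unfolding pos_def_mat_def by (simp add: axis_eq_0_iff)
    moreover have "axis i1 1 \<bullet> ((mat_fun f B - mat_fun f A) *v axis i1 (1::real)) =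
       axis i1 1 \<bullet> (mat_fun f B *v axis i1 1) - axis i1 1 \<bullet> (mat_fun f A *v axis i1 (1::real))"
      by (simp add: matrix_vector_mult_diff_rdistrib inner_diff_right)
    moreover have "axis i1 1 \<bullet> (mat_fun f A *v axis i1 (1::real)) = 8 * (3/5)^2"
    proof -
      have q: "(Q *v axis i1 1)$i1 = 3/5" using Qv[of "axis i1 1"] ne by (simp add: axis_def)
      have "axis i1 1 \<bullet> (mat_fun f A *v axis i1 (1::real)) = (\<Sum>i\<in>UNIV. (if i = i1 then 8 * ((Q *v axis i1 1)$i)^2 else 0))"
        unfolding FA quad_conj by (rule sum.cong) (auto simp: la_def f_def)
      also have "\<dots> = 8 * ((Q *v axis i1 1)$i1)^2" by simp
      finally show ?thesis using q by simp
    qed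
    moreover have "axis i1 1 \<bullet> (mat_fun f B *v axis i1 (1::real)) = 1"
    proof -
      have "axis i1 1 \<bullet> (mat_fun f B *v axis i1 (1::real)) = (\<Sum>i\<in>UNIV. (if i = i1 then 1 else 0))"
        unfolding FB quad_conj using ne by (intro sum.cong) (auto simp: lb_def f_def axis_def)
      then show ?thesis by simp
    qed
    ultimately show False by (simp add: power2_eq_square)
  qed
  have "\<not> O_mon TYPE('n) f"
    unfolding O_mon_def using symA symB pd npd by blast
  moreover have "S_mon f" unfolding S_mon_def f_def using cube_mono by blast
  moreover have "C1_real f" unfolding f_def using C1_cube by simp
  ultimately show ?thesis by blast
qed




lemma mat_add: "mat a + mat (b - a) = (mat b :: real^'n^'n)"
  by (simp add: vec_eq_iff mat_def)

lemma mat_neq: "a \<noteq> b \<Longrightarrow> (mat a :: real^'n^'n) \<noteq> mat b"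
proof
  assume "a \<noteq> b" "mat a = (mat b :: real^'n^'n)"
  then have "(mat a :: real^'n^'n)$undefined$undefined = (mat b :: real^'n^'n)$undefined$undefined" by simp
  then show False using \<open>a \<noteq> b\<close> by (simp add: mat_def)
qed

lemma frob_scalar_pos: "frob_inner (mat (f b) - mat (f a) :: real^'n^'n) (mat (b - a)) > 0 \<Longrightarrow> a < b \<Longrightarrow> f a < f b"
  unfolding mat_diff frob_mat by (simp add: zero_less_mult_iff)

lemma O_imp_S: "O_mon TYPE('n::finite) f \<Longrightarrow> S_mon f"
  unfolding S_mon_def
proof (intro allI impI)
  fix a b :: real assume O: "O_mon TYPE('n) f" and ab: "b > a"
  have "pos_def_mat (mat b - mat a :: real^'n^'n)" unfolding mat_diff pos_def_mat_iff using ab by simp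
  then have "pos_def_mat (mat_fun f (mat b) - mat_fun f (mat a) :: real^'n^'n)"
    using O sym_mat_mat unfolding O_mon_def by blast
  then show "f b > f a" unfolding mat_fun_scalar mat_diff pos_def_mat_iff by simp
qed

lemma H_imp_S: "H_mon TYPE('n::finite) f \<Longrightarrow> S_mon f"
  unfolding S_mon_def
proof (intro allI impI)
  fix a b :: real assume H: "H_mon TYPE('n) f" and ab: "b > a"
  have "frob_inner (mat_fun f (mat b) - mat_fun f (mat a)) (mat b - mat a :: real^'n^'n) > 0"
    using H sym_mat_mat mat_neq[of a b] ab unfolding H_mon_def by auto
  then show "f b > f a" using frob_scalar_pos[of f b a] ab unfolding mat_fun_scalar mat_diff by simp
qed

lemma P_imp_S: "P_mon TYPE('n::finite) f \<Longrightarrow> S_mon f"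
  unfolding S_mon_def
proof (intro allI impI)
  fix a b :: real assume P: "P_mon TYPE('n) f" and ab: "b > a"
  have "frob_inner (mat_fun f (mat a + mat (b - a)) - mat_fun f (mat a)) (mat (b - a) :: real^'n^'n) > 0"
    using P sym_mat_mat pos_def_mat_iff[of "b - a"] ab unfolding P_mon_def by auto
  then show "f b > f a" using frob_scalar_pos[of f b a] ab unfolding mat_add mat_fun_scalar by simp
qed

lemma S_imp_H: "S_mon f \<Longrightarrow> H_mon TYPE('n::finite) f"
  unfolding H_mon_def S_mon_def using S_imp_H_pair by blast

lemma H_imp_P: "H_mon TYPE('n::finite) f \<Longrightarrow> P_mon TYPE('n) f"
  unfolding P_mon_def
proof (intro allI impI)
  fix A H :: "real^'n^'n"
  assume Hm: "H_mon TYPE('n) f" and AH: "sym_mat A \<and> pos_def_mat H"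
  have "H \<noteq> 0"
  proof
    assume "H = 0"
    then have "pos_def_mat (0::real^'n^'n)" using AH by simp
    then have all0: "\<forall>x::real^'n. x = 0" unfolding pos_def_mat_def by simp
    have "(axis undefined (1::real) :: real^'n) \<noteq> 0" by (simp add: axis_eq_0_iff)
    then show False using all0 by blast
  qed
  then have ne: "A \<noteq> A + H" by simp
  have sH: "sym_mat H" using AH pos_def_mat_def by blast
  have sAH: "sym_mat (A + H)" using AH sH unfolding sym_mat_def
    by (simp add: vec_eq_iff transpose_def)
  show "frob_inner (mat_fun f (A + H) - mat_fun f A) H > 0"
    using Hm AH sAH ne unfolding H_mon_def by fastforce
qed

theorem proposition4p1:
  "(\<forall>f. C1_real f \<longrightarrow>
      (O_mon TYPE('n::finite) f \<longrightarrow> S_mon f) \<and>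
      (S_mon f \<longleftrightarrow> H_mon TYPE('n) f) \<and>
      (H_mon TYPE('n) f \<longleftrightarrow> P_mon TYPE('n) f)) \<and>
   (CARD('n) \<ge> 2 \<longrightarrow> (\<exists>f. C1_real f \<and> S_mon f \<and> \<not> O_mon TYPE('n) f))"
  using O_imp_S H_imp_S P_imp_S S_imp_H H_imp_P counterexample by blast


end
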